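(* Let $H$ be a real Hilbert space, $C\subset H$ nonempty closed convex, and $A,F:H\to H$ such that: (A1) $A$ is $\lambda$-strongly monotone and $L_A$-Lipschitz continuous, $F$ is $L_F$-Lipschitz continuous, and $A$, $F$ are sequentially weak-to-weak continuous; (A2) the couple $(A,F)$ is monotone; (A3) the solution set $\mathrm{Sol}(A,F,C)$ of $\mathrm{GVI}(A,F,C)$ is nonempty and $\mathcal C:=A(\mathrm{Sol}(A,F,C))$ is convex. Let $\mathcal A:=A^{-1}$, let $u^\dagger$ be the unique solution of the problem: find $u\in\mathcal C$ with $\langle\mathcal Au,v-u\rangle\ge0$ for all $v\in\mathcal C$, and let $x^\dagger:=\mathcal Au^\dagger$. For $\alpha>0$ let $F_\alpha:=F+\alpha I$ and let $x_\alpha$ be the unique solution of $\mathrm{GVI}(A,F_\alpha,C)$. Then: (i) the net $\{x_\alpha\}_{\alpha>0}$ is bounded on $(0,\infty)$; (ii) $x_\alpha\to x^\dagger$ (in norm) as $\alpha\to0$, and $x^\dagger\in\mathrm{Sol}(A,F,C)$; (iii) there exists $M>0$ such that $\|x_\alpha-x_\beta\|\le \dfrac{M|\alpha-\beta|}{\beta}$ for all $\alpha,\beta>0$.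
   Context: $\mathrm{GVI}(A,F,C)$: find $x^*\in H$ with $Fx^*\in C$ and $\langle Ax^*,y-Fx^*\rangle\ge0$ for all $y\in C$; its solution set is $\mathrm{Sol}(A,F,C)$. The couple $(A,F)$ is monotone if $\langle Ax-Ay,Fx-Fy\rangle\ge0$ for all $x,y\in H$. An operator is sequentially weak-to-weak continuous if $x^k\rightharpoonup\bar x$ implies $Ax^k\rightharpoonup A\bar x$. Under these assumptions $A$ is invertible, $\mathcal A=A^{-1}$ is Lipschitz and strongly monotone, so $u^\dagger$ exists and is unique; and for each $\alpha>0$ the couple $(A,F_\alpha)$ is $\alpha\lambda$-strongly monotone, so $x_\alpha$ exists and is unique. *)

theory Defs
  imports "HOL-Analysis.Analysis"
begin

definition weak_conv :: "(nat \<Rightarrow> 'a::real_inner) \<Rightarrow> 'a \<Rightarrow> bool" where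
  "weak_conv xs x \<longleftrightarrow> (\<forall>y. ((\<lambda>k. inner (xs k) y) \<longlongrightarrow> inner x y) sequentially)"

definition seq_weak_weak_cont :: "('a::real_inner \<Rightarrow> 'b::real_inner) \<Rightarrow> bool" where
  "seq_weak_weak_cont A \<longleftrightarrow> (\<forall>xs x. weak_conv xs x \<longrightarrow> weak_conv (\<lambda>k. A (xs k)) (A x))"

definition strongly_monotone :: "real \<Rightarrow> ('a::real_inner \<Rightarrow> 'a) \<Rightarrow> bool" where
  "strongly_monotone l A \<longleftrightarrow> l > 0 \<and> (\<forall>x y. inner (A x - A y) (x - y) \<ge> l * (norm (x - y))\<^sup>2)"

definition couple_monotone :: "('a::real_inner \<Rightarrow> 'a) \<Rightarrow> ('a \<Rightarrow> 'a) \<Rightarrow> bool" where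
  "couple_monotone A F \<longleftrightarrow> (\<forall>x y. inner (A x - A y) (F x - F y) \<ge> 0)"

definition Sol :: "('a::real_inner \<Rightarrow> 'a) \<Rightarrow> ('a \<Rightarrow> 'a) \<Rightarrow> 'a set \<Rightarrow> 'a set" where
  "Sol A F C = {x. F x \<in> C \<and> (\<forall>y\<in>C. inner (A x) (y - F x) \<ge> 0)}"

end

theory Submission
  imports Defs "HOL-Library.Diagonal_Subsequence" "HOL-Library.Infinite_Set"
begin


lemma parallelogram_mid:
  fixes y a b :: "'a::real_inner"
  shows "(norm (a - b))\<^sup>2 = 2 * (norm (y - a))\<^sup>2 + 2 * (norm (y - b))\<^sup>2 - 4 * (norm (y - (1/2) *\<^sub>R (a + b)))\<^sup>2"
  unfolding power2_norm_eq_inner by (simp add: inner_simps algebra_simps)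

lemma proj_exists:
  fixes K :: "'a::{real_inner,complete_space} set"
  assumes cl: "closed K" and cv: "convex K" and ne: "K \<noteq> {}"
  shows "\<exists>p\<in>K. \<forall>z\<in>K. inner (y - p) (z - p) \<le> 0"
proof -
  define d where "d = infdist y K"
  have d0: "d \<ge> 0" unfolding d_def by (rule infdist_nonneg)
  have dle: "\<And>z. z \<in> K \<Longrightarrow> d \<le> norm (y - z)" unfolding d_def
    by (metis dist_norm infdist_le)
  have "\<forall>n. \<exists>k\<in>K. norm (y - k) < d + 1/(Suc n)"
  proof
    fix n
    have "infdist y K < d + 1/Suc n" unfolding d_def by simp
    then have "(INF a\<in>K. dist y a) < d + 1/Suc n" using infdist_notempty[OF ne] by simp
    then obtain a where "a \<in> K" "dist y a < d + 1/Suc n"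
      by (subst (asm) cINF_less_iff) (use ne in \<open>auto intro: bdd_belowI2[where m=0]\<close>)
    then show "\<exists>k\<in>K. norm (y - k) < d + 1/(Suc n)" by (auto simp: dist_norm)
  qed
  then obtain k where kK: "\<And>n. k n \<in> K" and kd: "\<And>n. norm (y - k n) < d + 1/(Suc n)"
    by metis
  have sq: "(norm (y - k n))\<^sup>2 \<le> d\<^sup>2 + (2*d+1) * (1/Suc n)" for n
  proof -
    have e1: "1/Suc n \<le> (1::real)" by simp
    have "(norm (y - k n))\<^sup>2 \<le> (d + 1/Suc n)\<^sup>2"
      using kd[of n] by (intro power_mono) auto
    also have "\<dots> = d\<^sup>2 + (2*d + 1/Suc n) * (1/Suc n)" by (simp add: power2_eq_square algebra_simps)
    also have "\<dots> \<le> d\<^sup>2 + (2*d+1) * (1/Suc n)"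
      using e1 by (intro add_left_mono mult_right_mono) auto
    finally show ?thesis .
  qed
  have kk: "(norm (k m - k n))\<^sup>2 \<le> 2*(2*d+1) * (1/Suc m + 1/Suc n)" for m n
  proof -
    have mid: "(1/2) *\<^sub>R (k m + k n) \<in> K"
    proof -
      have "(1/2) *\<^sub>R k m + (1/2) *\<^sub>R k n \<in> K"
        using cv kK[of m] kK[of n] unfolding convex_def by (metis field_sum_of_halves divide_nonneg_nonneg zero_le_one zero_le_numeral)
      then show ?thesis by (simp add: scaleR_add_right)
    qed
    have "d\<^sup>2 \<le> (norm (y - (1/2) *\<^sub>R (k m + k n)))\<^sup>2"
      using dle[OF mid] d0 by (intro power_mono) auto
    then have "(norm (k m - k n))\<^sup>2 \<le> 2*(norm (y - k m))\<^sup>2 + 2*(norm (y - k n))\<^sup>2 - 4*d\<^sup>2"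
      using parallelogram_mid[of "k m" "k n" y] by linarith
    also have "\<dots> \<le> 2*(d\<^sup>2 + (2*d+1) * (1/Suc m)) + 2*(d\<^sup>2 + (2*d+1) * (1/Suc n)) - 4*d\<^sup>2"
      using sq[of m] sq[of n] by (intro diff_right_mono add_mono mult_left_mono) auto
    also have "\<dots> = 2*(2*d+1) * (1/Suc m + 1/Suc n)" by (simp add: algebra_simps)
    finally show ?thesis .
  qed
  have "Cauchy k"
  proof (rule metric_CauchyI)
    fix e :: real assume e: "e > 0"
    obtain N :: nat where N: "real N > 4*(2*d+1) / e\<^sup>2" using reals_Archimedean2 by blast
    show "\<exists>M. \<forall>m\<ge>M. \<forall>n\<ge>M. dist (k m) (k n) < e"
    proof (intro exI allI impI)
      fix m n assume mN: "m \<ge> N" and nN: "n \<ge> N"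
      have "4*(2*d+1) / e\<^sup>2 < real N" by (rule N)
      then have "4*(2*d+1) < real N * e\<^sup>2" using e by (simp add: field_simps)
      have a: "1/Suc m \<le> 1/Suc N" "1/Suc n \<le> 1/Suc N" using mN nN by (auto simp: frac_le)
      have "(norm (k m - k n))\<^sup>2 \<le> 2*(2*d+1) * (1/Suc m + 1/Suc n)" by (rule kk)
      also have "\<dots> \<le> 2*(2*d+1) * (2/Suc N)" using a d0 by (intro mult_left_mono) auto
      also have "\<dots> < e\<^sup>2"
      proof -
        have "real N * e\<^sup>2 \<le> real (Suc N) * e\<^sup>2" by (intro mult_right_mono) auto
        then have "4*(2*d+1) < real (Suc N) * e\<^sup>2" using \<open>4*(2*d+1) < real N * e\<^sup>2\<close> by linarith
        then show ?thesis by (simp add: field_simps)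
      qed
      finally have "(norm (k m - k n))\<^sup>2 < e\<^sup>2" .
      then have "norm (k m - k n) < e" using e by (simp add: power2_less_imp_less)
      then show "dist (k m) (k n) < e" by (simp add: dist_norm)
    qed
  qed
  then obtain p where kp: "k \<longlonglongrightarrow> p" using Cauchy_convergent_iff convergent_def by blast
  have pK: "p \<in> K" using cl kK kp closed_sequentially by blast
  have "(\<lambda>n. norm (y - k n)) \<longlonglongrightarrow> norm (y - p)" by (intro tendsto_intros kp)
  moreover have "(\<lambda>n. d + 1/Suc n) \<longlonglongrightarrow> d + 0"
    by (intro tendsto_intros LIMSEQ_Suc[OF lim_inverse_n'] )
  ultimately have "norm (y - p) \<le> d" using kd
    by (intro LIMSEQ_le[of "\<lambda>n. norm (y - k n)" _ "\<lambda>n. d + 1/Suc n"]) (auto intro: less_imp_le)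
  then have pmin: "\<And>z. z \<in> K \<Longrightarrow> norm (y - p) \<le> norm (y - z)" using dle by force
  show ?thesis
  proof (intro bexI[OF _ pK] ballI)
    fix z assume zK: "z \<in> K"
    show "inner (y - p) (z - p) \<le> 0"
    proof (rule ccontr)
      assume "\<not> ?thesis"
      then have pos: "inner (y - p) (z - p) > 0" by simp
      define t where "t = min 1 (inner (y - p) (z - p) / (norm (z - p))\<^sup>2)"
      have zp: "z \<noteq> p" using pos by auto
      then have nz: "(norm (z - p))\<^sup>2 > 0" by simp
      have t0: "t > 0" "t \<le> 1" using pos nz by (auto simp: t_def)
      have tle: "t * (norm (z - p))\<^sup>2 \<le> inner (y - p) (z - p)"
      proof -
        have "t \<le> inner (y - p) (z - p) / (norm (z - p))\<^sup>2" unfolding t_def by simp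
        then show ?thesis using nz by (simp add: pos_le_divide_eq)
      qed
      have memb: "p + t *\<^sub>R (z - p) \<in> K"
      proof -
        have "(1 - t) *\<^sub>R p + t *\<^sub>R z \<in> K" using cv pK zK t0 unfolding convex_def by auto
        moreover have "(1 - t) *\<^sub>R p + t *\<^sub>R z = p + t *\<^sub>R (z - p)" by (simp add: algebra_simps)
        ultimately show ?thesis by simp
      qed
      have "(norm (y - (p + t *\<^sub>R (z - p))))\<^sup>2 = (norm (y - p))\<^sup>2 - 2 * t * inner (y - p) (z - p) + t\<^sup>2 * (norm (z - p))\<^sup>2"
        unfolding power2_norm_eq_inner by (simp add: inner_simps algebra_simps power2_eq_square inner_commute)
      also have "\<dots> < (norm (y - p))\<^sup>2"
      proof -
        have "t\<^sup>2 * (norm (z - p))\<^sup>2 = t * (t * (norm (z - p))\<^sup>2)" by (simp add: power2_eq_square)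
        also have "\<dots> \<le> t * inner (y - p) (z - p)" using tle t0 by (intro mult_left_mono) auto
        finally have "t\<^sup>2 * (norm (z - p))\<^sup>2 \<le> t * inner (y - p) (z - p)" .
        moreover have "t * inner (y - p) (z - p) > 0" using t0 pos by simp
        ultimately show ?thesis by linarith
      qed
      finally have "norm (y - (p + t *\<^sub>R (z - p))) < norm (y - p)"
        by (simp add: power2_less_imp_less)
      then show False using pmin[OF memb] by simp
    qed
  qed
qed



lemma subspace_closure':
  fixes S :: "'a::real_normed_vector set"
  assumes "subspace S" shows "subspace (closure S)"
  unfolding subspace_def
proof (intro conjI ballI allI)
  show "0 \<in> closure S" using assms subspace_0 closure_subset by blast
next
  fix x y assume "x \<in> closure S" "y \<in> closure S"
  then obtain a b where "\<forall>n. a n \<in> S" "a \<longlonglongrightarrow> x" "\<forall>n. b n \<in> S" "b \<longlonglongrightarrow> y"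
    unfolding closure_sequential by blast
  then show "x + y \<in> closure S" unfolding closure_sequential
    by (intro exI[of _ "\<lambda>n. a n + b n"]) (auto intro: tendsto_add subspace_add[OF assms])
next
  fix c x assume "x \<in> closure S"
  then obtain a where "\<forall>n. a n \<in> S" "a \<longlonglongrightarrow> x"
    unfolding closure_sequential by blast
  then show "c *\<^sub>R x \<in> closure S" unfolding closure_sequential
    by (intro exI[of _ "\<lambda>n. c *\<^sub>R a n"]) (auto intro: tendsto_scaleR subspace_scale[OF assms])
qed

lemma weak_compact:
  fixes x :: "nat \<Rightarrow> 'a::{real_inner,complete_space}"
  assumes R: "\<And>k. norm (x k) \<le> R"
  shows "\<exists>\<sigma> xb. strict_mono \<sigma> \<and> weak_conv (x \<circ> \<sigma>) xb"
proof -
  have R0: "R \<ge> 0" using R[of 0] norm_ge_zero[of "x 0"] by linarith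
  interpret S: subseqs "\<lambda>m s. convergent (\<lambda>j. inner (x (s j)) (x m))"
  proof
    fix m and s :: "nat \<Rightarrow> nat" assume "strict_mono s"
    obtain r where r: "strict_mono r" "monoseq (\<lambda>n. inner (x (s (r n))) (x m))"
      using seq_monosub[of "\<lambda>n. inner (x (s n)) (x m)"] by auto
    have "Bseq (\<lambda>n. inner (x (s (r n))) (x m))"
    proof (rule BseqI')
      fix n
      have "norm (inner (x (s (r n))) (x m)) \<le> norm (x (s (r n))) * norm (x m)"
        using Cauchy_Schwarz_ineq2[of "x (s (r n))" "x m"] by simp
      also have "\<dots> \<le> R * norm (x m)" by (rule mult_right_mono[OF R]) simp
      finally show "norm (inner (x (s (r n))) (x m)) \<le> R * norm (x m)" .
    qed
    then have "convergent (\<lambda>n. inner (x (s (r n))) (x m))"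
      using r(2) by (rule Bseq_monoseq_convergent)
    then show "\<exists>r'. strict_mono r' \<and> convergent (\<lambda>j. inner (x ((s \<circ> r') j)) (x m))"
      using r(1) by (intro exI[of _ r]) (simp add: o_def)
  qed
  define \<sigma> where "\<sigma> = S.diagseq"
  define z where "z = x \<circ> \<sigma>"
  have smono: "strict_mono \<sigma>" unfolding \<sigma>_def by (rule S.subseq_diagseq)
  have conv_x: "convergent (\<lambda>j. inner (z j) (x m))" for m
  proof -
    have "convergent (\<lambda>j. inner (x ((S.diagseq \<circ> (+) (Suc m)) j)) (x m))"
    proof (rule S.diagseq_holds)
      fix r s n
      assume a: "strict_mono (r::nat\<Rightarrow>nat)" "convergent (\<lambda>j. inner (x (s j)) (x n))"
      then obtain L where "(\<lambda>j. inner (x (s j)) (x n)) \<longlonglongrightarrow> L" unfolding convergent_def by auto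
      from LIMSEQ_subseq_LIMSEQ[OF this a(1)]
      show "convergent (\<lambda>j. inner (x ((s \<circ> r) j)) (x n))" unfolding convergent_def by (auto simp: o_def)
    qed
    then obtain L where "(\<lambda>j. inner (x (S.diagseq (j + Suc m))) (x m)) \<longlonglongrightarrow> L"
      unfolding convergent_def by (auto simp: o_def add.commute)
    then have "(\<lambda>j. inner (x (S.diagseq j)) (x m)) \<longlonglongrightarrow> L"
      by (rule LIMSEQ_offset)
    then show ?thesis unfolding convergent_def z_def \<sigma>_def by auto
  qed
  define V where "V = {y. convergent (\<lambda>j. inner (z j) y)}"
  have subV: "subspace V" unfolding subspace_def V_def
  proof (intro conjI ballI allI)
    show "0 \<in> {y. convergent (\<lambda>j. inner (z j) y)}" by (simp add: convergent_const)
  next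
    fix a b assume "a \<in> {y. convergent (\<lambda>j. inner (z j) y)}" "b \<in> {y. convergent (\<lambda>j. inner (z j) y)}"
    then show "a + b \<in> {y. convergent (\<lambda>j. inner (z j) y)}" by (simp add: inner_add_right convergent_add)
  next
    fix c a assume "a \<in> {y. convergent (\<lambda>j. inner (z j) y)}"
    then show "c *\<^sub>R a \<in> {y. convergent (\<lambda>j. inner (z j) y)}"
      by (simp add: convergent_mult convergent_const)
  qed
  define T where "T = closure (span (range x))"
  have spanV: "span (range x) \<subseteq> V"
    by (rule span_minimal) (use conv_x subV in \<open>auto simp: V_def z_def\<close>)
  have TV: "y \<in> T \<Longrightarrow> convergent (\<lambda>j. inner (z j) y)" for y
  proof -
    assume yT: "y \<in> T"
    have "Cauchy (\<lambda>j. inner (z j) y)"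
    proof (rule metric_CauchyI)
      fix e :: real assume e: "e > 0"
      define \<delta> where "\<delta> = e / (3 * (R + 1))"
      have \<delta>: "\<delta> > 0" using e R0 by (simp add: \<delta>_def)
      obtain y' where y': "y' \<in> span (range x)" "dist y' y < \<delta>"
        using yT \<delta> unfolding T_def closure_approachable by blast
      have "convergent (\<lambda>j. inner (z j) y')" using spanV y' V_def by auto
      then have "Cauchy (\<lambda>j. inner (z j) y')" by (rule convergent_Cauchy)
      then obtain N where N: "\<And>m n. m \<ge> N \<Longrightarrow> n \<ge> N \<Longrightarrow> dist (inner (z m) y') (inner (z n) y') < e/3"
        using e metric_CauchyD[of _ "e/3"] by (meson divide_pos_pos zero_less_numeral)
      have bnd: "\<bar>inner (z j) y - inner (z j) y'\<bar> \<le> R * \<delta>" for j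
      proof -
        have "\<bar>inner (z j) y - inner (z j) y'\<bar> = \<bar>inner (z j) (y - y')\<bar>" by (simp add: inner_diff_right)
        also have "\<dots> \<le> norm (z j) * norm (y - y')" by (rule Cauchy_Schwarz_ineq2)
        also have "\<dots> \<le> R * \<delta>"
          using R[of "\<sigma> j"] y'(2) by (intro mult_mono) (auto simp: z_def dist_norm norm_minus_commute R0)
        finally show ?thesis .
      qed
      have R\<delta>: "R * \<delta> < e/3" using e R0 unfolding \<delta>_def by (simp add: field_simps)
      show "\<exists>M. \<forall>m\<ge>M. \<forall>n\<ge>M. dist (inner (z m) y) (inner (z n) y) < e"
      proof (intro exI allI impI)
        fix m n assume "m \<ge> N" "n \<ge> N"
        then have "\<bar>inner (z m) y' - inner (z n) y'\<bar> < e/3" using N by (simp add: dist_real_def)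
        then show "dist (inner (z m) y) (inner (z n) y) < e"
          using bnd[of m] bnd[of n] R\<delta> unfolding dist_real_def by linarith
      qed
    qed
    then show ?thesis using Cauchy_convergent_iff by blast
  qed
  define f where "f y = lim (\<lambda>j. inner (z j) y)" for y
  have flim: "y \<in> T \<Longrightarrow> (\<lambda>j. inner (z j) y) \<longlonglongrightarrow> f y" for y
  proof -
    assume "y \<in> T"
    then have "convergent (\<lambda>j. inner (z j) y)" by (rule TV)
    then show ?thesis unfolding f_def by (simp add: convergent_LIMSEQ_iff)
  qed
  have subT: "subspace T" unfolding T_def by (intro subspace_closure' subspace_span)
  have clT: "closed T" unfolding T_def by simp
  have cvT: "convex T" using subT by (rule subspace_imp_convex)
  have zT: "z j \<in> T" for j unfolding T_def z_def
    using closure_subset span_superset by fastforce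
  define K where "K n = closure (convex hull (z ` {n..}))" for n
  have Kcl: "closed (K n)" and Kcv: "convex (K n)" and Kne: "K n \<noteq> {}" for n
    unfolding K_def by (auto intro: convex_closure)
  have Ksub: "z ` {n..} \<subseteq> H \<Longrightarrow> closed H \<Longrightarrow> convex H \<Longrightarrow> K n \<subseteq> H" for n H
    unfolding K_def by (intro closure_minimal hull_minimal) auto
  have Kmem: "j \<ge> n \<Longrightarrow> z j \<in> K n" for j n
    unfolding K_def using closure_subset hull_subset by fastforce
  have Kmono: "m \<ge> n \<Longrightarrow> K m \<subseteq> K n" for m n
    unfolding K_def by (intro closure_mono hull_mono image_mono) auto
  have KT: "K n \<subseteq> T" for n using Ksub[OF _ clT cvT] zT by auto
  have KR: "K n \<subseteq> cball 0 R" for n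
  proof (rule Ksub[OF _ closed_cball convex_cball])
    show "z ` {n..} \<subseteq> cball 0 R" using R by (auto simp: z_def)
  qed
  obtain p where pK: "\<And>n. p n \<in> K n" and pv: "\<And>n w. w \<in> K n \<Longrightarrow> inner (0 - p n) (w - p n) \<le> 0"
    using proj_exists[OF Kcl Kcv Kne, of _ 0] by metis
  have pR: "norm (p n) \<le> R" for n using KR[of n] pK[of n] by (auto simp: subset_iff)
  have pip: "m \<ge> n \<Longrightarrow> (norm (p n))\<^sup>2 \<le> inner (p n) (p m)" for m n
  proof -
    assume "m \<ge> n"
    then have "p m \<in> K n" using pK[of m] Kmono[of n m] by blast
    from pv[OF this] show ?thesis
      by (simp add: inner_diff_right inner_diff_left power2_norm_eq_inner)
  qed
  have inc: "incseq (\<lambda>n. norm (p n))"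
  proof (rule incseq_SucI)
    fix n
    have "(norm (p n))\<^sup>2 \<le> norm (p n) * norm (p (Suc n))"
      using pip[of n "Suc n"] Cauchy_Schwarz_ineq2[of "p n" "p (Suc n)"] by simp
    then show "norm (p n) \<le> norm (p (Suc n))"
    proof (cases "norm (p n) = 0")
      case True then show ?thesis by simp
    next
      case False
      then have "0 < norm (p n)" by simp
      moreover have "norm (p n) * norm (p n) \<le> norm (p n) * norm (p (Suc n))"
        using \<open>(norm (p n))\<^sup>2 \<le> _\<close> by (simp add: power2_eq_square)
      ultimately show ?thesis using mult_le_cancel_left_pos by blast
    qed
  qed
  have "\<forall>i. norm (p i) \<le> R" using pR by simp
  then obtain Lp where "(\<lambda>n. norm (p n)) \<longlonglongrightarrow> Lp" using incseq_convergent[OF inc] by blast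
  then have "(\<lambda>n. (norm (p n))\<^sup>2) \<longlonglongrightarrow> Lp\<^sup>2" by (intro tendsto_intros)
  then have Cg: "Cauchy (\<lambda>n. (norm (p n))\<^sup>2)" by (rule LIMSEQ_imp_Cauchy)
  have pdiff: "m \<ge> n \<Longrightarrow> (norm (p m - p n))\<^sup>2 \<le> (norm (p m))\<^sup>2 - (norm (p n))\<^sup>2" for m n
    using pip[of n m] unfolding power2_norm_eq_inner
    by (simp add: inner_diff_left inner_diff_right inner_commute)
  have "Cauchy p"
  proof (rule metric_CauchyI)
    fix e :: real assume e: "e > 0"
    then obtain N where N: "\<And>m n. m \<ge> N \<Longrightarrow> n \<ge> N \<Longrightarrow> dist ((norm (p m))\<^sup>2) ((norm (p n))\<^sup>2) < e\<^sup>2"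
      using metric_CauchyD[OF Cg, of "e\<^sup>2"] by auto
    have *: "m \<ge> N \<Longrightarrow> n \<ge> N \<Longrightarrow> m \<ge> n \<Longrightarrow> dist (p m) (p n) < e" for m n
    proof -
      assume a: "m \<ge> N" "n \<ge> N" "m \<ge> n"
      have "(norm (p m - p n))\<^sup>2 < e\<^sup>2"
      proof -
        have "(norm (p m))\<^sup>2 - (norm (p n))\<^sup>2 \<le> dist ((norm (p m))\<^sup>2) ((norm (p n))\<^sup>2)"
          unfolding dist_real_def by (rule abs_ge_self)
        then show ?thesis using pdiff[OF a(3)] N[OF a(1,2)] by linarith
      qed
      then show ?thesis using e by (simp add: dist_norm power2_less_imp_less)
    qed
    show "\<exists>M. \<forall>m\<ge>M. \<forall>n\<ge>M. dist (p m) (p n) < e"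
    proof (intro exI allI impI)
      fix m n assume "m \<ge> N" "n \<ge> N"
      then show "dist (p m) (p n) < e"
        using *[of m n] *[of n m] by (cases "m \<le> n") (auto simp: dist_commute)
    qed
  qed
  then have "convergent p" by (simp add: Cauchy_convergent_iff)
  then obtain pb where pb: "p \<longlonglongrightarrow> pb" unfolding convergent_def by blast
  have pbK: "pb \<in> K n" for n
  proof -
    have l: "(\<lambda>j. p (j + n)) \<longlonglongrightarrow> pb" using pb by (rule LIMSEQ_ignore_initial_segment)
    have m: "\<forall>j. p (j + n) \<in> K n"
    proof
      fix j have "K (j + n) \<subseteq> K n" by (rule Kmono) simp
      then show "p (j + n) \<in> K n" using pK[of "j + n"] by blast
    qed
    show ?thesis by (rule closed_sequentially[OF Kcl m[rule_format] l])
  qed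
  have pbT: "pb \<in> T" using pbK[of 0] KT by auto
  have pbf: "y \<in> T \<Longrightarrow> inner pb y = f y" for y
  proof (rule ccontr)
    assume yT: "y \<in> T" and ne: "inner pb y \<noteq> f y"
    define e where "e = \<bar>inner pb y - f y\<bar> / 2"
    have e: "e > 0" using ne by (simp add: e_def)
    have "\<exists>N. \<forall>j\<ge>N. norm (inner (z j) y - f y) < e"
      using flim[OF yT] e unfolding LIMSEQ_iff by blast
    then obtain N where N: "\<And>j. j \<ge> N \<Longrightarrow> \<bar>inner (z j) y - f y\<bar> < e" by auto
    define H where "H = {w. inner y w \<le> f y + e} \<inter> {w. inner y w \<ge> f y - e}"
    have "K N \<subseteq> H"
    proof (rule Ksub)
      show "closed H" unfolding H_def by (intro closed_Int closed_halfspace_le closed_halfspace_ge)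
      show "convex H" unfolding H_def by (intro convex_Int convex_halfspace_le convex_halfspace_ge)
      show "z ` {N..} \<subseteq> H"
      proof
        fix w assume "w \<in> z ` {N..}"
        then obtain j where "j \<ge> N" "w = z j" by auto
        then show "w \<in> H" using N[of j] by (auto simp: H_def inner_commute)
      qed
    qed
    then have "pb \<in> H" using pbK by auto
    then have "\<bar>inner pb y - f y\<bar> \<le> e" by (auto simp: H_def inner_commute)
    then show False using e unfolding e_def by simp
  qed
  have "weak_conv z pb" unfolding weak_conv_def
  proof
    fix y
    obtain q where qT: "q \<in> T" and qv: "\<And>t. t \<in> T \<Longrightarrow> inner (y - q) (t - q) \<le> 0"
    proof -
      have "0 \<in> T" by (rule subspace_0[OF subT])
      then have "T \<noteq> {}" by auto
      then show ?thesis using proj_exists[OF clT cvT, of y] that by blast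
    qed
    have orth: "t \<in> T \<Longrightarrow> inner (y - q) t = 0" for t
    proof -
      assume tT: "t \<in> T"
      have "q + t \<in> T" "q - t \<in> T" using subspace_add[OF subT qT tT] subspace_diff[OF subT qT tT] by auto
      from qv[OF this(1)] qv[OF this(2)] show ?thesis by (simp add: inner_diff_right)
    qed
    have e1: "inner (z j) y = inner (z j) q" for j
      using orth[OF zT[of j]] unfolding inner_diff_left by (simp add: inner_commute)
    have e2: "inner pb y = inner pb q"
      using orth[OF pbT] unfolding inner_diff_left by (simp add: inner_commute)
    show "(\<lambda>k. inner (z k) y) \<longlonglongrightarrow> inner pb y"
      unfolding e1 e2 pbf[OF qT] by (rule flim[OF qT])
  qed
  then show ?thesis using smono unfolding z_def by blast
qed



theorem lemma3p2:
  fixes A F :: "'a::{real_inner, complete_space} \<Rightarrow> 'a"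
    and C :: "'a set"
    and lam LA LF :: real
    and u_dag :: 'a
    and x_a :: "real \<Rightarrow> 'a"
  assumes C_ne: "C \<noteq> {}" and C_closed: "closed C" and C_convex: "convex C"
    and A1_sm: "strongly_monotone lam A"
    and A1_LA: "LA-lipschitz_on UNIV A"
    and A1_LF: "LF-lipschitz_on UNIV F"
    and A1_wA: "seq_weak_weak_cont A"
    and A1_wF: "seq_weak_weak_cont F"
    and A2: "couple_monotone A F"
    and A3_ne: "Sol A F C \<noteq> {}"
    and A3_cvx: "convex (A ` Sol A F C)"
    and u_dag_mem: "u_dag \<in> A ` Sol A F C"
    and u_dag_vi: "\<forall>v \<in> A ` Sol A F C. inner (inv A u_dag) (v - u_dag) \<ge> 0"
    and x_a_sol: "\<forall>\<alpha>>0. x_a \<alpha> \<in> Sol A (\<lambda>x. F x + \<alpha> *\<^sub>R x) C"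
  shows "bounded (x_a ` {0<..})
    \<and> ((x_a \<longlongrightarrow> inv A u_dag) (at_right 0) \<and> inv A u_dag \<in> Sol A F C)
    \<and> (\<exists>M>0. \<forall>\<alpha>>0. \<forall>\<beta>>0. norm (x_a \<alpha> - x_a \<beta>) \<le> M * \<bar>\<alpha> - \<beta>\<bar> / \<beta>)"
proof -
  have lam: "lam > 0" using A1_sm by (simp add: strongly_monotone_def)
  have sm: "\<And>x y. lam * (norm (x - y))\<^sup>2 \<le> inner (A x - A y) (x - y)"
    using A1_sm by (simp add: strongly_monotone_def)
  define L where "L = \<bar>LA\<bar>"
  have L0: "L \<ge> 0" by (simp add: L_def)
  have lip: "\<And>x y. norm (A x - A y) \<le> L * norm (x - y)"
  proof -
    fix x y
    have "norm (A x - A y) \<le> LA * norm (x - y)"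
      using lipschitz_onD[OF A1_LA, of x y] by (simp add: dist_norm)
    also have "\<dots> \<le> L * norm (x - y)" unfolding L_def by (intro mult_right_mono) auto
    finally show "norm (A x - A y) \<le> L * norm (x - y)" .
  qed
  have mono: "\<And>x y. inner (A x - A y) (F x - F y) \<ge> 0"
    using A2 by (simp add: couple_monotone_def)
  have injA: "inj A"
  proof (rule injI)
    fix x y assume "A x = A y"
    then have "lam * (norm (x - y))\<^sup>2 \<le> 0" using sm[of x y] by simp
    then show "x = y" using lam by (simp add: mult_le_0_iff)
  qed
  obtain xd where xdS: "xd \<in> Sol A F C" and ud: "u_dag = A xd" using u_dag_mem by blast
  have xd: "inv A u_dag = xd" using injA ud by simp
  have SolD: "x \<in> Sol A G C \<Longrightarrow> G x \<in> C \<and> (\<forall>y\<in>C. inner (A x) (y - G x) \<ge> 0)" for x G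
    by (simp add: Sol_def)
  have xaC: "\<And>\<alpha>. \<alpha> > 0 \<Longrightarrow> F (x_a \<alpha>) + \<alpha> *\<^sub>R x_a \<alpha> \<in> C"
    using x_a_sol SolD by blast
  have xaV: "\<And>\<alpha> y. \<alpha> > 0 \<Longrightarrow> y \<in> C \<Longrightarrow> inner (A (x_a \<alpha>)) (y - (F (x_a \<alpha>) + \<alpha> *\<^sub>R x_a \<alpha>)) \<ge> 0"
    using x_a_sol SolD by blast
  have key: "inner (A (x_a \<alpha>) - A xs) (x_a \<alpha>) \<le> 0" if "\<alpha> > 0" "xs \<in> Sol A F C" for \<alpha> xs
  proof -
    define xa where "xa = x_a \<alpha>"
    have v1: "inner (A xa) (F xs - (F xa + \<alpha> *\<^sub>R xa)) \<ge> 0"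
      unfolding xa_def using xaV[OF that(1)] SolD[OF that(2)] by blast
    have v2: "inner (A xs) ((F xa + \<alpha> *\<^sub>R xa) - F xs) \<ge> 0"
      unfolding xa_def using xaC[OF that(1)] SolD[OF that(2)] by blast
    have m: "inner (A xa - A xs) (F xa - F xs) \<ge> 0" by (rule mono)
    have "\<alpha> * (inner (A xa) xa - inner (A xs) xa) \<le> 0"
      using v1 v2 m by (simp add: inner_diff_right inner_diff_left inner_add_right algebra_simps)
    then have "inner (A xa) xa - inner (A xs) xa \<le> 0" using that(1) by (simp add: mult_le_0_iff)
    then show ?thesis unfolding xa_def by (simp add: inner_diff_left)
  qed
  define \<rho> where "\<rho> = L * norm xd / lam"
  have dist_xd: "norm (x_a \<alpha> - xd) \<le> \<rho>" if "\<alpha> > 0" for \<alpha>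
  proof -
    define d where "d = x_a \<alpha> - xd"
    have "lam * (norm d)\<^sup>2 \<le> inner (A (x_a \<alpha>) - A xd) d" unfolding d_def by (rule sm)
    also have "\<dots> = inner (A (x_a \<alpha>) - A xd) (x_a \<alpha>) - inner (A (x_a \<alpha>) - A xd) xd"
      unfolding d_def by (simp add: inner_diff_right)
    also have "\<dots> \<le> - inner (A (x_a \<alpha>) - A xd) xd" using key[OF that xdS] by simp
    also have "\<dots> \<le> norm (A (x_a \<alpha>) - A xd) * norm xd"
      using Cauchy_Schwarz_ineq2[of "A (x_a \<alpha>) - A xd" xd] by linarith
    also have "\<dots> \<le> L * norm d * norm xd" unfolding d_def by (intro mult_right_mono lip) auto
    finally have *: "lam * (norm d)\<^sup>2 \<le> L * norm d * norm xd" .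
    show ?thesis
    proof (cases "norm d = 0")
      case True then show ?thesis using lam L0 by (simp add: \<rho>_def d_def)
    next
      case False
      then have "norm d > 0" by simp
      with * have "lam * norm d \<le> L * norm xd"
        by (simp add: power2_eq_square algebra_simps)
      then show ?thesis using lam unfolding \<rho>_def d_def[symmetric] by (simp add: field_simps)
    qed
  qed
  define R where "R = norm xd + \<rho>"
  have \<rho>0: "\<rho> \<ge> 0" using L0 lam by (simp add: \<rho>_def)
  have R0: "R \<ge> 0" using \<rho>0 by (simp add: R_def)
  have xaR: "norm (x_a \<alpha>) \<le> R" if "\<alpha> > 0" for \<alpha>
    using dist_xd[OF that] norm_triangle_ineq[of "x_a \<alpha> - xd" xd] unfolding R_def by simp
  have part1: "bounded (x_a ` {0<..})"
    unfolding bounded_iff using xaR by auto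

  define M where "M = L * R / lam + 1"
  have "L * R / lam \<ge> 0" using L0 R0 lam by simp
  then have M0: "M > 0" by (simp add: M_def)
  have part3: "\<forall>\<alpha>>0. \<forall>\<beta>>0. norm (x_a \<alpha> - x_a \<beta>) \<le> M * \<bar>\<alpha> - \<beta>\<bar> / \<beta>"
  proof (intro allI impI)
    fix \<alpha> \<beta> :: real assume a: "\<alpha> > 0" and b: "\<beta> > 0"
    define xa where "xa = x_a \<alpha>"
    define xb where "xb = x_a \<beta>"
    define d where "d = xa - xb"
    define DA where "DA = A xa - A xb"
    have v1: "inner (A xa) ((F xb + \<beta> *\<^sub>R xb) - (F xa + \<alpha> *\<^sub>R xa)) \<ge> 0"
      unfolding xa_def xb_def using xaV[OF a xaC[OF b]] .
    have v2: "inner (A xb) ((F xa + \<alpha> *\<^sub>R xa) - (F xb + \<beta> *\<^sub>R xb)) \<ge> 0"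
      unfolding xa_def xb_def using xaV[OF b xaC[OF a]] .
    have m: "inner (A xa - A xb) (F xa - F xb) \<ge> 0" by (rule mono)
    have S1: "\<alpha> * inner DA xa - \<beta> * inner DA xb \<le> 0"
      using v1 v2 m unfolding DA_def
      by (simp add: inner_diff_right inner_diff_left inner_add_right algebra_simps)
    have id: "\<beta> * inner DA d + (\<alpha> - \<beta>) * inner DA xa = \<alpha> * inner DA xa - \<beta> * inner DA xb"
      unfolding d_def by (simp add: inner_diff_right algebra_simps)
    have "\<beta> * (lam * (norm d)\<^sup>2) \<le> \<beta> * inner DA d"
      using sm[of xa xb] b unfolding DA_def d_def by (intro mult_left_mono) auto
    also have "\<dots> \<le> - ((\<alpha> - \<beta>) * inner DA xa)" using S1 id by linarith
    also have "\<dots> \<le> \<bar>\<alpha> - \<beta>\<bar> * (norm DA * norm xa)"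
    proof -
      have "- ((\<alpha> - \<beta>) * inner DA xa) \<le> \<bar>(\<alpha> - \<beta>) * inner DA xa\<bar>" by simp
      also have "\<dots> = \<bar>\<alpha> - \<beta>\<bar> * \<bar>inner DA xa\<bar>" by (simp add: abs_mult)
      also have "\<dots> \<le> \<bar>\<alpha> - \<beta>\<bar> * (norm DA * norm xa)"
        by (intro mult_left_mono Cauchy_Schwarz_ineq2) auto
      finally show ?thesis .
    qed
    also have "\<dots> \<le> \<bar>\<alpha> - \<beta>\<bar> * (L * norm d * R)"
    proof -
      have "norm DA * norm xa \<le> (L * norm d) * R"
        unfolding DA_def d_def using lip[of xa xb] xaR[OF a] unfolding xa_def
        using L0 by (intro mult_mono) auto
      then show ?thesis by (intro mult_left_mono) auto
    qed
    finally have *: "\<beta> * (lam * (norm d)\<^sup>2) \<le> \<bar>\<alpha> - \<beta>\<bar> * (L * norm d * R)" .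
    have rhs0: "0 \<le> M * \<bar>\<alpha> - \<beta>\<bar> / \<beta>" using M0 b by simp
    show "norm (x_a \<alpha> - x_a \<beta>) \<le> M * \<bar>\<alpha> - \<beta>\<bar> / \<beta>"
    proof (cases "norm d = 0")
      case True then show ?thesis using rhs0 by (simp add: d_def xa_def xb_def)
    next
      case False
      then have nd: "norm d > 0" by simp
      have "(\<beta> * lam * norm d) * norm d \<le> (\<bar>\<alpha> - \<beta>\<bar> * L * R) * norm d"
        using * by (simp add: power2_eq_square algebra_simps)
      then have "\<beta> * lam * norm d \<le> \<bar>\<alpha> - \<beta>\<bar> * L * R"
        using nd by simp
      then have "norm d \<le> (L * R / lam) * \<bar>\<alpha> - \<beta>\<bar> / \<beta>"
        using lam b by (simp add: field_simps)
      also have "\<dots> \<le> M * \<bar>\<alpha> - \<beta>\<bar> / \<beta>"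
        using b unfolding M_def by (intro divide_right_mono mult_right_mono) auto
      finally show ?thesis by (simp add: d_def xa_def xb_def)
    qed
  qed

  have claim: "(\<lambda>k. x_a (a k)) \<longlonglongrightarrow> xd"
    if apos: "\<And>k. a k > 0" and a0: "a \<longlonglongrightarrow> 0" and wc: "weak_conv (\<lambda>k. x_a (a k)) xb" for a xb
  proof -
    define xk where "xk k = x_a (a k)" for k
    have wc': "weak_conv xk xb" using wc unfolding xk_def by simp
    have wA: "weak_conv (\<lambda>k. A (xk k)) (A xb)" using A1_wA wc' unfolding seq_weak_weak_cont_def by blast
    have wF: "weak_conv (\<lambda>k. F (xk k)) (F xb)" using A1_wF wc' unfolding seq_weak_weak_cont_def by blast
    have xkR: "norm (xk k) \<le> R" for k unfolding xk_def by (rule xaR[OF apos])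
    have az: "(\<lambda>k. a k * c) \<longlonglongrightarrow> 0" for c
      using tendsto_mult[OF a0 tendsto_const[of c]] by simp
    define w where "w k = F (xk k) + a k *\<^sub>R xk k" for k
    have wC: "w k \<in> C" for k unfolding w_def xk_def by (rule xaC[OF apos])
    have ww: "(\<lambda>k. inner (w k) y) \<longlonglongrightarrow> inner (F xb) y" for y
    proof -
      have "(\<lambda>k. a k * inner (xk k) y) \<longlonglongrightarrow> 0"
      proof (rule Lim_null_comparison)
        show "\<forall>\<^sub>F k in sequentially. norm (a k * inner (xk k) y) \<le> a k * (R * norm y)"
        proof (rule always_eventually, rule allI)
          fix k
          have "norm (a k * inner (xk k) y) = a k * \<bar>inner (xk k) y\<bar>"
            using apos[of k] by (simp add: abs_mult)
          also have "\<dots> \<le> a k * (R * norm y)"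
          proof -
            have "norm (xk k) * norm y \<le> R * norm y" by (rule mult_right_mono[OF xkR]) simp
            then have "\<bar>inner (xk k) y\<bar> \<le> R * norm y"
              using Cauchy_Schwarz_ineq2[of "xk k" y] by linarith
            then show ?thesis using apos[of k] by (intro mult_left_mono) auto
          qed
          finally show "norm (a k * inner (xk k) y) \<le> a k * (R * norm y)" .
        qed
        show "(\<lambda>k. a k * (R * norm y)) \<longlonglongrightarrow> 0" by (rule az)
      qed
      moreover have "(\<lambda>k. inner (F (xk k)) y) \<longlonglongrightarrow> inner (F xb) y"
        using wF unfolding weak_conv_def by blast
      ultimately have "(\<lambda>k. inner (F (xk k)) y + a k * inner (xk k) y) \<longlonglongrightarrow> inner (F xb) y + 0"
        by (intro tendsto_add)
      then show ?thesis by (simp add: w_def inner_add_left)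
    qed
    obtain c where cC: "c \<in> C" and cv: "\<And>z. z \<in> C \<Longrightarrow> inner (F xb - c) (z - c) \<le> 0"
      using proj_exists[OF C_closed C_convex C_ne, of "F xb"] by blast
    have "(\<lambda>k. inner (w k) (F xb - c) - inner c (F xb - c)) \<longlonglongrightarrow> inner (F xb) (F xb - c) - inner c (F xb - c)"
      by (intro tendsto_diff ww tendsto_const)
    moreover have "\<forall>\<^sub>F k in sequentially. inner (w k) (F xb - c) - inner c (F xb - c) \<le> 0"
    proof (rule always_eventually, rule allI)
      fix k show "inner (w k) (F xb - c) - inner c (F xb - c) \<le> 0"
        using cv[OF wC[of k]] by (simp add: inner_diff_right inner_diff_left inner_commute)
    qed
    ultimately have "inner (F xb) (F xb - c) - inner c (F xb - c) \<le> 0"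
      by (intro tendsto_upperbound) auto
    then have "inner (F xb - c) (F xb - c) \<le> 0" by (simp add: inner_diff_left)
    then have "inner (F xb - c) (F xb - c) = 0" using inner_ge_zero[of "F xb - c"] by linarith
    then have "F xb = c" by simp
    with cC have FxbC: "F xb \<in> C" by simp
    define B where "B = (norm (A xd) + L * \<rho>) * R"
    have AxkB: "\<bar>inner (A (xk k)) (xk k)\<bar> \<le> B" for k
    proof -
      have "norm (A (xk k)) \<le> norm (A xd) + norm (A (xk k) - A xd)"
        using norm_triangle_ineq[of "A (xk k) - A xd" "A xd"] by simp
      also have "\<dots> \<le> norm (A xd) + L * \<rho>"
      proof -
        have "L * norm (xk k - xd) \<le> L * \<rho>"
          using dist_xd[OF apos[of k]] L0 unfolding xk_def by (intro mult_left_mono) auto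
        then show ?thesis using lip[of "xk k" xd] by linarith
      qed
      finally have n1: "norm (A (xk k)) \<le> norm (A xd) + L * \<rho>" .
      have "\<bar>inner (A (xk k)) (xk k)\<bar> \<le> norm (A (xk k)) * norm (xk k)" by (rule Cauchy_Schwarz_ineq2)
      also have "\<dots> \<le> (norm (A xd) + L * \<rho>) * R"
        using n1 xkR[of k] mult_nonneg_nonneg[OF L0 \<rho>0] by (intro mult_mono) auto
      finally show ?thesis unfolding B_def .
    qed
    have aA0: "(\<lambda>k. a k * inner (A (xk k)) (xk k)) \<longlonglongrightarrow> 0"
    proof (rule Lim_null_comparison)
      show "\<forall>\<^sub>F k in sequentially. norm (a k * inner (A (xk k)) (xk k)) \<le> a k * B"
        using apos AxkB by (intro always_eventually allI) (simp add: abs_mult less_imp_le mult_left_mono)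
      show "(\<lambda>k. a k * B) \<longlonglongrightarrow> 0" by (rule az)
    qed
    have VI: "inner (A xb) (y - F xb) \<ge> 0" if yC: "y \<in> C" for y
    proof -
      define sk where "sk k = inner (A (xk k)) y - a k * inner (A (xk k)) (xk k)
         - inner (A (xk k)) (F xb) - inner (F (xk k)) (A xb) + inner (A xb) (F xb)" for k
      have sk0: "sk k \<ge> 0" for k
      proof -
        have v: "inner (A (xk k)) (y - (F (xk k) + a k *\<^sub>R xk k)) \<ge> 0"
          unfolding xk_def by (rule xaV[OF apos yC])
        have m: "inner (A (xk k) - A xb) (F (xk k) - F xb) \<ge> 0" by (rule mono)
        show ?thesis using v m unfolding sk_def
          by (simp add: inner_diff_right inner_diff_left inner_add_right inner_commute algebra_simps)
      qed
      have "sk \<longlonglongrightarrow> inner (A xb) y - 0 - inner (A xb) (F xb) - inner (F xb) (A xb) + inner (A xb) (F xb)"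
        unfolding sk_def
        using wA wF aA0 unfolding weak_conv_def
        by (intro tendsto_add tendsto_diff tendsto_const) auto
      then have "0 \<le> inner (A xb) y - 0 - inner (A xb) (F xb) - inner (F xb) (A xb) + inner (A xb) (F xb)"
        using sk0 by (intro tendsto_lowerbound) (auto intro: always_eventually)
      then show ?thesis by (simp add: inner_diff_right inner_commute)
    qed
    have xbS: "xb \<in> Sol A F C" unfolding Sol_def using FxbC VI by blast
    have udv: "inner xd (A xb - A xd) \<ge> 0" using u_dag_vi xbS xd ud by auto
    define h where "h k = inner (A xd) xd - inner (A (xk k)) xd" for k
    have hlim: "h \<longlonglongrightarrow> inner (A xd) xd - inner (A xb) xd"
      unfolding h_def using wA unfolding weak_conv_def by (intro tendsto_diff tendsto_const) auto
    have hle: "inner (A xd) xd - inner (A xb) xd \<le> 0" using udv by (simp add: inner_diff_right inner_commute)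
    have gle: "lam * (norm (xk k - xd))\<^sup>2 \<le> h k" for k
    proof -
      have "lam * (norm (xk k - xd))\<^sup>2 \<le> inner (A (xk k) - A xd) (xk k - xd)" by (rule sm)
      also have "\<dots> = inner (A (xk k) - A xd) (xk k) - inner (A (xk k) - A xd) xd"
        by (simp add: inner_diff_right)
      also have "\<dots> \<le> - inner (A (xk k) - A xd) xd"
        using key[OF apos[of k] xdS] unfolding xk_def by simp
      also have "\<dots> = h k" by (simp add: h_def inner_diff_left)
      finally show ?thesis .
    qed
    have "(\<lambda>k. max (h k) 0) \<longlonglongrightarrow> max (inner (A xd) xd - inner (A xb) xd) 0"
      by (intro tendsto_max hlim tendsto_const)
    then have hm: "(\<lambda>k. max (h k) 0) \<longlonglongrightarrow> 0" using hle by (simp add: max_def)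
    have "(\<lambda>k. lam * (norm (xk k - xd))\<^sup>2) \<longlonglongrightarrow> 0"
    proof (rule tendsto_sandwich[OF _ _ tendsto_const hm])
      show "\<forall>\<^sub>F n in sequentially. 0 \<le> lam * (norm (xk n - xd))\<^sup>2" using lam by simp
      show "\<forall>\<^sub>F n in sequentially. lam * (norm (xk n - xd))\<^sup>2 \<le> max (h n) 0"
        using gle by (intro always_eventually allI) (simp add: le_max_iff_disj)
    qed
    then have "(\<lambda>k. (1/lam) * (lam * (norm (xk k - xd))\<^sup>2)) \<longlonglongrightarrow> (1/lam) * 0"
      by (intro tendsto_mult tendsto_const)
    then have "(\<lambda>k. (norm (xk k - xd))\<^sup>2) \<longlonglongrightarrow> 0" using lam by simp
    then have "(\<lambda>k. sqrt ((norm (xk k - xd))\<^sup>2)) \<longlonglongrightarrow> sqrt 0" by (rule tendsto_real_sqrt)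
    then have "(\<lambda>k. norm (xk k - xd)) \<longlonglongrightarrow> 0" by simp
    then have "(\<lambda>k. xk k - xd) \<longlonglongrightarrow> 0" by (simp add: tendsto_norm_zero_iff)
    then show ?thesis unfolding xk_def using Lim_null by blast
  qed
  have part2: "(x_a \<longlongrightarrow> xd) (at_right 0)"
  proof (rule tendsto_at_right_sequentially[of 0 1])
    show "(0::real) < 1" by simp
  next
    fix S :: "nat \<Rightarrow> real"
    assume Spos: "\<And>n. 0 < S n" and "\<And>n. S n < 1" and "decseq S" and S0: "S \<longlonglongrightarrow> 0"
    show "(\<lambda>n. x_a (S n)) \<longlonglongrightarrow> xd"
    proof (rule ccontr)
      assume nc: "\<not> (\<lambda>n. x_a (S n)) \<longlonglongrightarrow> xd"
      then obtain e where e: "e > 0" and fr: "\<forall>N. \<exists>n\<ge>N. \<not> dist (x_a (S n)) xd < e"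
        unfolding lim_sequentially by blast
      define Bd where "Bd = {n. \<not> dist (x_a (S n)) xd < e}"
      have infB: "infinite Bd" unfolding infinite_nat_iff_unbounded_le Bd_def using fr by blast
      define r where "r = enumerate Bd"
      have rmono: "strict_mono r" unfolding r_def by (rule strict_mono_enumerate[OF infB])
      have rB: "\<not> dist (x_a (S (r k))) xd < e" for k
        using enumerate_in_set[OF infB, of k] unfolding r_def Bd_def by simp
      obtain \<sigma> xb where sm\<sigma>: "strict_mono \<sigma>" and wcb: "weak_conv ((\<lambda>k. x_a (S (r k))) \<circ> \<sigma>) xb"
        using weak_compact[of "\<lambda>k. x_a (S (r k))" R] xaR Spos by blast
      define a where "a k = S (r (\<sigma> k))" for k
      have apos: "\<And>k. a k > 0" unfolding a_def by (rule Spos)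
      have "(S \<circ> (r \<circ> \<sigma>)) \<longlonglongrightarrow> 0" using S0 strict_mono_o[OF rmono sm\<sigma>] by (rule LIMSEQ_subseq_LIMSEQ)
      then have a0: "a \<longlonglongrightarrow> 0" unfolding a_def by (simp add: o_def)
      have "weak_conv (\<lambda>k. x_a (a k)) xb" using wcb unfolding a_def by (simp add: o_def)
      from claim[OF apos a0 this] have "(\<lambda>k. x_a (a k)) \<longlonglongrightarrow> xd" .
      then obtain N where "\<forall>n\<ge>N. dist (x_a (a n)) xd < e" using e unfolding lim_sequentially by blast
      then have "dist (x_a (a N)) xd < e" by simp
      then show False using rB[of "\<sigma> N"] unfolding a_def by simp
    qed
  qed
  show ?thesis using part1 part2 part3 M0 xd xdS by auto
qed
end
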